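(* Let $(Z,d)$ be a distance space, $X\cup Y=Z$ a cover, $A:=X\cap Y$, and $r\in[0,\infty)$. Assume there is $v\in A$ such that for all $x\in X\setminus A$ and $y\in Y\setminus A$ with $d(x,y)\le r$ one has $d(x,v)\le r$ and $d(y,v)\le r$. Fix such a $v$ and assume in addition that one of the following holds: (1) for every $x\in X\setminus A$ and $y\in Y\setminus A$ with $d(x,y)\le r$, every $w\in A$ with $d(w,x)\le r$ and $d(w,y)\le r$ satisfies $d(v,w)\le r$; (2) $\mathrm{diam}(A)\le r$; (3) $A=\{v\}$. Then the inclusion $\mathrm{VR}_r(X)\cup\mathrm{VR}_r(Y)\hookrightarrow\mathrm{VR}_r(Z)$ is a weak equivalence.
   Context: A distance on a set $Z$ is a function $d\colon Z\times Z\to[0,\infty]$ with $d(x,y)=d(y,x)$ and $d(x,x)=0$ (no triangle inequality assumed). $\mathrm{diam}(A)$ is the supremum of $d(a,b)$ over $a,b\in A$ (the maximum for finite $A$). For $B\subset Z$ and $r\in[0,\infty)$, $\mathrm{VR}_r(B)$ is the simplicial complex of all finite nonempty $\sigma\subset B$ with $d(x,y)\le r$ for all $x,y\in\sigma$. Homotopical notions refer to geometric realizations. *)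

theory Defs
  imports "HOL-Analysis.Analysis"
begin

text \<open>A distance takes values in [0,infinity]; we use ennreal. The radius r is a real r >= 0,
  compared via ennreal r.\<close>

definition diam_d :: "('a \<Rightarrow> 'a \<Rightarrow> ennreal) \<Rightarrow> 'a set \<Rightarrow> ennreal" where
  "diam_d d A = Sup {d a b | a b. a \<in> A \<and> b \<in> A}"

definition VR :: "('a \<Rightarrow> 'a \<Rightarrow> ennreal) \<Rightarrow> real \<Rightarrow> 'a set \<Rightarrow> 'a set set" where
  "VR d r B = {\<sigma>. finite \<sigma> \<and> \<sigma> \<noteq> {} \<and> \<sigma> \<subseteq> B \<and> (\<forall>x\<in>\<sigma>. \<forall>y\<in>\<sigma>. d x y \<le> ennreal r)}"

text \<open>Points of the realization of K are barycentric coordinate functions: nonnegative,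
  with support a simplex of K and coordinates summing to 1.\<close>

definition realization :: "'a set set \<Rightarrow> ('a \<Rightarrow> real) set" where
  "realization K = {f. (\<forall>x. 0 \<le> f x) \<and> {x. f x \<noteq> 0} \<in> K \<and> sum f {x. f x \<noteq> 0} = 1}"

definition closed_simplex :: "'a set \<Rightarrow> ('a \<Rightarrow> real) set" where
  "closed_simplex \<sigma> = {f. (\<forall>x. 0 \<le> f x) \<and> (\<forall>x. x \<notin> \<sigma> \<longrightarrow> f x = 0) \<and> sum f \<sigma> = 1}"

text \<open>Each closed simplex carries its Euclidean topology (= subspace of the product topology,
  since it lies in a finite-dimensional coordinate subspace); the realization carries the
  coherent (weak) topology with respect to the closed simplices.\<close>
definition realization_open :: "'a set set \<Rightarrow> ('a \<Rightarrow> real) set \<Rightarrow> bool" where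
  "realization_open K U \<longleftrightarrow> U \<subseteq> realization K \<and>
     (\<forall>\<sigma>\<in>K. openin (subtopology (powertop_real UNIV) (closed_simplex \<sigma>)) (U \<inter> closed_simplex \<sigma>))"

lemma istopology_realization_open: "istopology (realization_open K)"
  unfolding istopology_def realization_open_def
proof (intro conjI allI impI)
  fix S T assume S: "S \<subseteq> realization K \<and> (\<forall>\<sigma>\<in>K. openin (subtopology (powertop_real UNIV) (closed_simplex \<sigma>)) (S \<inter> closed_simplex \<sigma>))"
    and T: "T \<subseteq> realization K \<and> (\<forall>\<sigma>\<in>K. openin (subtopology (powertop_real UNIV) (closed_simplex \<sigma>)) (T \<inter> closed_simplex \<sigma>))"
  show "S \<inter> T \<subseteq> realization K" using S by blast
  show "\<forall>\<sigma>\<in>K. openin (subtopology (powertop_real UNIV) (closed_simplex \<sigma>)) (S \<inter> T \<inter> closed_simplex \<sigma>)"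
  proof
    fix \<sigma> assume "\<sigma> \<in> K"
    then have "openin (subtopology (powertop_real UNIV) (closed_simplex \<sigma>)) ((S \<inter> closed_simplex \<sigma>) \<inter> (T \<inter> closed_simplex \<sigma>))"
      using S T \<open>\<sigma> \<in> K\<close> by (metis openin_Int)
    then show "openin (subtopology (powertop_real UNIV) (closed_simplex \<sigma>)) (S \<inter> T \<inter> closed_simplex \<sigma>)"
      by (simp add: Int_ac)
  qed
next
  fix \<K> assume H: "\<forall>U\<in>\<K>. U \<subseteq> realization K \<and> (\<forall>\<sigma>\<in>K. openin (subtopology (powertop_real UNIV) (closed_simplex \<sigma>)) (U \<inter> closed_simplex \<sigma>))"
  show "\<Union>\<K> \<subseteq> realization K" using H by blast
  show "\<forall>\<sigma>\<in>K. openin (subtopology (powertop_real UNIV) (closed_simplex \<sigma>)) (\<Union>\<K> \<inter> closed_simplex \<sigma>)"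
  proof
    fix \<sigma> assume "\<sigma> \<in> K"
    then have "openin (subtopology (powertop_real UNIV) (closed_simplex \<sigma>)) (\<Union>((\<lambda>U. U \<inter> closed_simplex \<sigma>) ` \<K>))"
      using H \<open>\<sigma> \<in> K\<close> by (intro openin_Union) blast
    moreover have "\<Union>((\<lambda>U. U \<inter> closed_simplex \<sigma>) ` \<K>) = \<Union>\<K> \<inter> closed_simplex \<sigma>" by blast
    ultimately show "openin (subtopology (powertop_real UNIV) (closed_simplex \<sigma>)) (\<Union>\<K> \<inter> closed_simplex \<sigma>)"
      by simp
  qed
qed

definition realization_top :: "'a set set \<Rightarrow> ('a \<Rightarrow> real) topology" where
  "realization_top K = topology (realization_open K)"

text \<open>The n-cube I^n, with coordinates indexed by {0..<n} (other coordinates 0), and its boundary.\<close>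
definition cube :: "nat \<Rightarrow> (nat \<Rightarrow> real) set" where
  "cube n = {t. (\<forall>i<n. 0 \<le> t i \<and> t i \<le> 1) \<and> (\<forall>i\<ge>n. t i = 0)}"

definition cube_boundary :: "nat \<Rightarrow> (nat \<Rightarrow> real) set" where
  "cube_boundary n = {t \<in> cube n. \<exists>i<n. t i = 0 \<or> t i = 1}"

definition cube_top :: "nat \<Rightarrow> (nat \<Rightarrow> real) topology" where
  "cube_top n = subtopology (powertop_real UNIV) (cube n)"

text \<open>Representatives of elements of pi_n(X,x0): maps (I^n, boundary) -> (X, x0).\<close>
definition based_cube_map :: "'b topology \<Rightarrow> 'b \<Rightarrow> nat \<Rightarrow> ((nat \<Rightarrow> real) \<Rightarrow> 'b) \<Rightarrow> bool" where
  "based_cube_map X x0 n \<alpha> \<longleftrightarrow> continuous_map (cube_top n) X \<alpha> \<and> (\<forall>t\<in>cube_boundary n. \<alpha> t = x0)"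

definition homotopic_rel_boundary :: "'b topology \<Rightarrow> 'b \<Rightarrow> nat \<Rightarrow> ((nat \<Rightarrow> real) \<Rightarrow> 'b) \<Rightarrow> ((nat \<Rightarrow> real) \<Rightarrow> 'b) \<Rightarrow> bool" where
  "homotopic_rel_boundary X x0 n \<alpha> \<beta> \<longleftrightarrow>
     homotopic_with (\<lambda>h. \<forall>t\<in>cube_boundary n. h t = x0) (cube_top n) X \<alpha> \<beta>"

text \<open>f induces a bijection pi_n(X,x0) -> pi_n(Y, f x0) (unfolded: surjective and injective
  on based homotopy classes).\<close>
definition induces_bij_pi :: "'b topology \<Rightarrow> 'c topology \<Rightarrow> ('b \<Rightarrow> 'c) \<Rightarrow> nat \<Rightarrow> 'b \<Rightarrow> bool" where
  "induces_bij_pi X Y f n x0 \<longleftrightarrow>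
     (\<forall>\<beta>. based_cube_map Y (f x0) n \<beta> \<longrightarrow>
        (\<exists>\<alpha>. based_cube_map X x0 n \<alpha> \<and> homotopic_rel_boundary Y (f x0) n (f \<circ> \<alpha>) \<beta>)) \<and>
     (\<forall>\<alpha> \<alpha>'. based_cube_map X x0 n \<alpha> \<longrightarrow> based_cube_map X x0 n \<alpha>' \<longrightarrow>
        homotopic_rel_boundary Y (f x0) n (f \<circ> \<alpha>) (f \<circ> \<alpha>') \<longrightarrow>
        homotopic_rel_boundary X x0 n \<alpha> \<alpha>')"

definition weak_homotopy_equivalence :: "'b topology \<Rightarrow> 'c topology \<Rightarrow> ('b \<Rightarrow> 'c) \<Rightarrow> bool" where
  "weak_homotopy_equivalence X Y f \<longleftrightarrow>
     continuous_map X Y f \<and>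
     (\<forall>y\<in>topspace Y. \<exists>x\<in>topspace X. path_component_of Y (f x) y) \<and>
     (\<forall>x\<in>topspace X. \<forall>x'\<in>topspace X. path_component_of Y (f x) (f x') \<longrightarrow> path_component_of X x x') \<and>
     (\<forall>n\<ge>1. \<forall>x0\<in>topspace X. induces_bij_pi X Y f n x0)"

end

theory Submission
  imports Defs
begin


definition simpcx :: "'a set set \<Rightarrow> bool" where
  "simpcx K \<longleftrightarrow> (\<forall>\<sigma>\<in>K. finite \<sigma> \<and> \<sigma> \<noteq> {} \<and> (\<forall>\<tau>. \<tau> \<subseteq> \<sigma> \<longrightarrow> \<tau> \<noteq> {} \<longrightarrow> \<tau> \<in> K))"

definition spt :: "('a \<Rightarrow> real) \<Rightarrow> 'a set" where "spt f = {x. f x \<noteq> 0}"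

lemma simpcx_fin: "simpcx K \<Longrightarrow> \<sigma> \<in> K \<Longrightarrow> finite \<sigma>"
  unfolding simpcx_def by blast
lemma simpcx_ne: "simpcx K \<Longrightarrow> \<sigma> \<in> K \<Longrightarrow> \<sigma> \<noteq> {}"
  unfolding simpcx_def by blast
lemma simpcx_sub: "simpcx K \<Longrightarrow> \<sigma> \<in> K \<Longrightarrow> \<tau> \<subseteq> \<sigma> \<Longrightarrow> \<tau> \<noteq> {} \<Longrightarrow> \<tau> \<in> K"
  unfolding simpcx_def by blast

lemma ptop_eq: "powertop_real UNIV = (euclidean :: ('a \<Rightarrow> real) topology)"
  by (simp add: euclidean_product_topology)

lemma open_real:
  "openin (realization_top K) U \<longleftrightarrow> realization_open K U"
  by (simp add: realization_top_def istopology_realization_open)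

lemma cs_sub_real:
  assumes "simpcx K" "\<sigma> \<in> K" shows "closed_simplex \<sigma> \<subseteq> realization K"
proof
  fix f assume f: "f \<in> closed_simplex \<sigma>"
  have fin: "finite \<sigma>" and cl: "\<And>\<tau>. \<tau> \<subseteq> \<sigma> \<Longrightarrow> \<tau> \<noteq> {} \<Longrightarrow> \<tau> \<in> K"
    using assms simpcx_fin simpcx_sub by blast+
  have sub: "{x. f x \<noteq> 0} \<subseteq> \<sigma>" using f unfolding closed_simplex_def by auto
  have "sum f \<sigma> = sum f {x. f x \<noteq> 0}"
    by (rule sum.mono_neutral_right[OF fin sub]) auto
  then have s1: "sum f {x. f x \<noteq> 0} = 1" using f unfolding closed_simplex_def by auto
  then have "{x. f x \<noteq> 0} \<noteq> {}" by (metis sum.empty zero_neq_one)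
  then have "{x. f x \<noteq> 0} \<in> K" using cl[OF sub] by simp
  moreover have "\<forall>x. 0 \<le> f x" using f unfolding closed_simplex_def by simp
  ultimately show "f \<in> realization K" using s1 unfolding realization_def by simp
qed

lemma real_cs:
  assumes "f \<in> realization K" shows "f \<in> closed_simplex (spt f)" "spt f \<in> K"
  using assms unfolding realization_def closed_simplex_def spt_def by auto

lemma topspace_real:
  assumes "simpcx K" shows "topspace (realization_top K) = realization K"
proof -
  have "realization_open K (realization K)"
    unfolding realization_open_def
  proof (intro conjI ballI)
    fix \<sigma> assume "\<sigma> \<in> K"
    then have e: "realization K \<inter> closed_simplex \<sigma> = topspace (subtopology (powertop_real UNIV) (closed_simplex \<sigma>))"
      using cs_sub_real[OF assms] by auto
    show "openin (subtopology (powertop_real UNIV) (closed_simplex \<sigma>)) (realization K \<inter> closed_simplex \<sigma>)"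
      unfolding e by (rule openin_topspace)
  qed simp
  then have "realization K \<subseteq> topspace (realization_top K)"
    using open_real openin_subset by blast
  moreover have "topspace (realization_top K) \<subseteq> realization K"
    using open_real openin_topspace realization_open_def by blast
  ultimately show ?thesis by blast
qed

lemma finite_closed_fun:
  assumes "finite (S :: ('a \<Rightarrow> real) set)" shows "closed S"
proof -
  have "Hausdorff_space (powertop_real (UNIV::'a set))"
    by (simp add: Hausdorff_space_product_topology Hausdorff_space_euclidean)
  then have "t1_space (powertop_real (UNIV::'a set))" by (rule Hausdorff_imp_t1_space)
  then have "\<forall>S. finite S \<and> S \<subseteq> topspace (powertop_real (UNIV::'a set)) \<longrightarrow> closedin (powertop_real UNIV) S"
    by (simp only: t1_space_closedin_finite)
  then have "closedin (powertop_real UNIV) S" using assms by (simp add: ptop_eq)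
  then show ?thesis by (simp add: ptop_eq)
qed

lemma closed_cs: "closed (closed_simplex \<sigma>)"
proof -
  have "closed_simplex \<sigma> = (\<Inter>x. {f::'a\<Rightarrow>real. 0 \<le> f x}) \<inter> (\<Inter>x\<in>-\<sigma>. {f. f x = 0}) \<inter> {f. sum f \<sigma> = 1}"
    unfolding closed_simplex_def by auto
  moreover have "closed {f::'a\<Rightarrow>real. 0 \<le> f x}" for x
    by (intro closed_Collect_le continuous_on_const continuous_on_product_coordinates)
  moreover have "closed {f::'a\<Rightarrow>real. f x = 0}" for x
    by (intro closed_Collect_eq continuous_on_const continuous_on_product_coordinates)
  moreover have "closed {f::'a\<Rightarrow>real. sum f \<sigma> = 1}"
    by (intro closed_Collect_eq continuous_on_const continuous_on_sum continuous_on_product_coordinates)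
  ultimately show ?thesis by (simp add: closed_INT closed_Int)
qed

lemma cm_real_id:
  assumes "simpcx L" shows "continuous_map (realization_top L) euclidean id"
  unfolding continuous_map_def
proof (intro conjI allI impI)
  fix U :: "('a \<Rightarrow> real) set" assume "openin euclidean U"
  then have oU: "open U" by simp
  have "realization_open L (realization L \<inter> U)"
    unfolding realization_open_def
  proof (intro conjI ballI)
    fix \<sigma> assume "\<sigma> \<in> L"
    then have "realization L \<inter> U \<inter> closed_simplex \<sigma> = closed_simplex \<sigma> \<inter> U"
      using cs_sub_real[OF assms] by auto
    then show "openin (subtopology (powertop_real UNIV) (closed_simplex \<sigma>)) (realization L \<inter> U \<inter> closed_simplex \<sigma>)"
      using oU by (auto simp: ptop_eq openin_open_Int)
  qed simp
  moreover have "{x \<in> topspace (realization_top L). id x \<in> U} = realization L \<inter> U"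
    using topspace_real[OF assms] by auto
  ultimately show "openin (realization_top L) {x \<in> topspace (realization_top L). id x \<in> U}"
    by (simp only: open_real)
qed simp

lemma cm_from_real:
  assumes "simpcx L" "continuous_map W (realization_top L) h"
  shows "continuous_map W euclidean h"
  using continuous_map_compose[OF assms(2) cm_real_id[OF assms(1)]] by (simp add: o_def)

lemma closed_cs_minus:
  assumes "openin (subtopology (powertop_real UNIV) (closed_simplex \<sigma>)) (U \<inter> closed_simplex \<sigma>)"
  shows "closed (closed_simplex \<sigma> - U)"
proof -
  have "closedin (top_of_set (closed_simplex \<sigma>)) (closed_simplex \<sigma> - (U \<inter> closed_simplex \<sigma>))"
    using assms by (simp add: ptop_eq closedin_diff)
  then have "closedin (top_of_set (closed_simplex \<sigma>)) (closed_simplex \<sigma> - U)"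
    by (metis Diff_Int2 inf.idem)
  then show ?thesis using closed_cs closedin_closed_trans by blast
qed

lemma cm_into_real:
  assumes L: "simpcx L" and h: "continuous_map W euclidean h"
    and F: "finite F" "F \<subseteq> L" and im: "h ` topspace W \<subseteq> (\<Union>\<sigma>\<in>F. closed_simplex \<sigma>)"
  shows "continuous_map W (realization_top L) h"
  unfolding continuous_map_def
proof (intro conjI allI impI)
  show "h \<in> topspace W \<rightarrow> topspace (realization_top L)"
  proof
    fix x assume "x \<in> topspace W"
    then obtain \<sigma> where "\<sigma> \<in> F" "h x \<in> closed_simplex \<sigma>" using im by blast
    then show "h x \<in> topspace (realization_top L)"
      using cs_sub_real[OF L] F(2) topspace_real[OF L] by blast
  qed
  fix U assume "openin (realization_top L) U"
  then have U: "realization_open L U" by (simp add: open_real)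
  define C where "C = (\<Union>\<sigma>\<in>F. closed_simplex \<sigma> - U)"
  have "closed C" unfolding C_def
    using U F by (intro closed_UN) (auto simp: realization_open_def intro!: closed_cs_minus)
  then have "closedin W {x \<in> topspace W. h x \<in> C}"
    using h by (intro closedin_continuous_map_preimage) auto
  then have "openin W (topspace W - {x \<in> topspace W. h x \<in> C})"
    by (simp add: openin_diff)
  moreover have "topspace W - {x \<in> topspace W. h x \<in> C} = {x \<in> topspace W. h x \<in> U}"
  proof (intro set_eqI iffI)
    fix x assume x: "x \<in> topspace W - {x \<in> topspace W. h x \<in> C}"
    then obtain \<sigma> where "\<sigma> \<in> F" "h x \<in> closed_simplex \<sigma>" using im by blast
    then show "x \<in> {x \<in> topspace W. h x \<in> U}" using x unfolding C_def by blast
  next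
    fix x assume x: "x \<in> {x \<in> topspace W. h x \<in> U}"
    then show "x \<in> topspace W - {x \<in> topspace W. h x \<in> C}" unfolding C_def by blast
  qed
  ultimately show "openin W {x \<in> topspace W. h x \<in> U}" by simp
qed

lemma fin_cs_in_real: "finite \<tau> \<Longrightarrow> finite {S \<in> F. S \<subseteq> \<tau>}"
  by (rule finite_subset[of _ "Pow \<tau>"]) auto

lemma compact_fin_spt:
  assumes L: "simpcx L" and C: "compactin (realization_top L) C"
  shows "finite (spt ` C)"
proof -
  have CL: "C \<subseteq> realization L" using C compactin_subset_topspace topspace_real[OF L] by blast
  define rho where "rho \<sigma> = (SOME f. f \<in> C \<and> spt f = \<sigma>)" for \<sigma>
  have rho: "rho \<sigma> \<in> C \<and> spt (rho \<sigma>) = \<sigma>" if "\<sigma> \<in> spt ` C" for \<sigma>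
  proof -
    from that obtain c where c: "c \<in> C" "\<sigma> = spt c" by blast
    show ?thesis unfolding rho_def by (rule someI[of _ c]) (use c in blast)
  qed
  define S where "S = rho ` (spt ` C)"
  have SC: "S \<subseteq> C" using rho S_def by auto
  define Op where "Op f = realization L - (S - {f})" for f
  have openO: "openin (realization_top L) (Op f)" for f
    unfolding open_real realization_open_def
  proof (intro conjI ballI)
    show "Op f \<subseteq> realization L" unfolding Op_def by auto
    fix \<tau> assume "\<tau> \<in> L"
    then have fin: "finite \<tau>" using L simpcx_fin by blast
    have "(S - {f}) \<inter> closed_simplex \<tau> \<subseteq> rho ` {s \<in> spt ` C. s \<subseteq> \<tau>}"
    proof
      fix g assume g: "g \<in> (S - {f}) \<inter> closed_simplex \<tau>"
      then obtain s where s: "s \<in> spt ` C" "g = rho s" using S_def by auto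
      have "spt g \<subseteq> \<tau>" using g unfolding closed_simplex_def spt_def by auto
      then show "g \<in> rho ` {s \<in> spt ` C. s \<subseteq> \<tau>}" using s rho[OF s(1)] by auto
    qed
    moreover have "finite (rho ` {s \<in> spt ` C. s \<subseteq> \<tau>})"
      using fin_cs_in_real[OF fin] by (rule finite_imageI)
    ultimately have "finite ((S - {f}) \<inter> closed_simplex \<tau>)"
      by (rule finite_subset)
    then have "closed ((S - {f}) \<inter> closed_simplex \<tau>)" by (rule finite_closed_fun)
    have "openin (top_of_set (closed_simplex \<tau>)) (closed_simplex \<tau> - (S - {f}) \<inter> closed_simplex \<tau>)"
    proof (rule openin_diff)
      show "openin (top_of_set (closed_simplex \<tau>)) (closed_simplex \<tau>)"
        using openin_topspace[of "top_of_set (closed_simplex \<tau>)"] by simp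
      show "closedin (top_of_set (closed_simplex \<tau>)) ((S - {f}) \<inter> closed_simplex \<tau>)"
        using \<open>closed ((S - {f}) \<inter> closed_simplex \<tau>)\<close> by (rule closed_subset[rotated]) blast
    qed
    moreover have "closed_simplex \<tau> - (S - {f}) \<inter> closed_simplex \<tau> = Op f \<inter> closed_simplex \<tau>"
      unfolding Op_def using cs_sub_real[OF L \<open>\<tau> \<in> L\<close>] by auto
    ultimately show "openin (subtopology (powertop_real UNIV) (closed_simplex \<tau>)) (Op f \<inter> closed_simplex \<tau>)"
      by (simp add: ptop_eq)
  qed
  have "finite S"
  proof (cases "S = {}")
    case False
    then obtain f0 where f0: "f0 \<in> S" by auto
    have cov: "C \<subseteq> \<Union>(Op ` S)"
    proof
      fix c assume c: "c \<in> C"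
      show "c \<in> \<Union>(Op ` S)"
      proof (cases "c \<in> S")
        case True then show ?thesis using c CL unfolding Op_def by auto
      next
        case False then show ?thesis using c CL f0 unfolding Op_def by auto
      qed
    qed
    have oo: "\<forall>B\<in>Op ` S. openin (realization_top L) B" using openO by blast
    have "\<exists>F. finite F \<and> F \<subseteq> Op ` S \<and> C \<subseteq> \<Union>F"
      using C oo cov unfolding compactin_def by blast
    then obtain F where F: "finite F" "F \<subseteq> Op ` S" "C \<subseteq> \<Union>F" by blast
    obtain S' where S': "S' \<subseteq> S" "finite S'" "F = Op ` S'"
      using finite_subset_image[OF F(1) F(2)] by blast
    have "S \<subseteq> S'"
    proof
      fix s assume s: "s \<in> S"
      then have "s \<in> \<Union>(Op ` S')" using SC F(3) S'(3) by blast
      then obtain f where "f \<in> S'" "s \<in> Op f" by blast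
      then show "s \<in> S'" using s unfolding Op_def by auto
    qed
    then show ?thesis using S' finite_subset by blast
  qed simp
  moreover have "spt ` C = spt ` S"
  proof
    show "spt ` C \<subseteq> spt ` S"
    proof
      fix s assume s: "s \<in> spt ` C"
      then have "s = spt (rho s)" using rho by simp
      then show "s \<in> spt ` S" unfolding S_def using s by blast
    qed
    show "spt ` S \<subseteq> spt ` C" using SC by blast
  qed
  ultimately show ?thesis by simp
qed

lemma cpt_fin:
  assumes L: "simpcx L" and W: "compact_space W" and h: "continuous_map W (realization_top L) h"
  shows "\<exists>F. finite F \<and> F \<subseteq> L \<and> h ` topspace W \<subseteq> (\<Union>\<sigma>\<in>F. closed_simplex \<sigma>)"
proof -
  have "compactin (realization_top L) (h ` topspace W)"
    using image_compactin W h compact_space_def by blast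
  then have "finite (spt ` h ` topspace W)" using compact_fin_spt L by blast
  moreover have "h ` topspace W \<subseteq> realization L"
    using h topspace_real[OF L] continuous_map_image_subset_topspace by blast
  ultimately show ?thesis
    by (intro exI[of _ "spt ` h ` topspace W"]) (auto dest: real_cs)
qed



lemma cm_comp:
  assumes "continuous_map W euclidean (F :: 'b \<Rightarrow> ('a \<Rightarrow> real))"
  shows "continuous_map W euclideanreal (\<lambda>x. F x a)"
proof -
  have "continuous_map W (powertop_real UNIV) F" using assms by (simp add: ptop_eq)
  then show ?thesis by (simp add: continuous_map_componentwise_UNIV)
qed

lemma cm_of_comp:
  assumes "\<And>a. continuous_map W euclideanreal (\<lambda>x. (F :: 'b \<Rightarrow> ('a \<Rightarrow> real)) x a)"
  shows "continuous_map W euclidean F"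
proof -
  have "continuous_map W (powertop_real UNIV) F" using assms by (simp add: continuous_map_componentwise_UNIV)
  then show ?thesis by (simp add: ptop_eq)
qed

lemma cs_mono: "\<sigma> \<subseteq> \<tau> \<Longrightarrow> finite \<tau> \<Longrightarrow> f \<in> closed_simplex \<sigma> \<Longrightarrow> f \<in> closed_simplex \<tau>"
proof -
  assume st: "\<sigma> \<subseteq> \<tau>" and fin: "finite \<tau>" and f: "f \<in> closed_simplex \<sigma>"
  have "sum f \<tau> = sum f \<sigma>"
    by (rule sum.mono_neutral_right[OF fin st]) (use f in \<open>auto simp: closed_simplex_def\<close>)
  then show ?thesis using f st unfolding closed_simplex_def by auto
qed

lemma cs_comb:
  assumes "f \<in> closed_simplex \<tau>" "f' \<in> closed_simplex \<tau>" "0 \<le> t" "t \<le> 1"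
  shows "(\<lambda>a. (1 - t) * f a + t * f' a) \<in> closed_simplex \<tau>"
proof -
  have "sum (\<lambda>a. (1 - t) * f a + t * f' a) \<tau> = (1 - t) * sum f \<tau> + t * sum f' \<tau>"
    by (simp add: sum.distrib sum_distrib_left)
  also have "\<dots> = 1" using assms unfolding closed_simplex_def by simp
  finally show ?thesis using assms unfolding closed_simplex_def by simp
qed

lemma spt_cs: "f \<in> closed_simplex \<tau> \<Longrightarrow> spt f \<subseteq> \<tau>"
  unfolding closed_simplex_def spt_def by auto

lemma g_comp:
  assumes K: "simpcx K" and L: "simpcx L"
    and tau: "\<And>\<sigma>. \<sigma> \<in> L \<Longrightarrow> tau \<sigma> \<in> L \<and> \<sigma> \<subseteq> tau \<sigma> \<and> continuous_on (closed_simplex \<sigma>) g \<and>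
                (\<forall>f\<in>closed_simplex \<sigma>. g f \<in> closed_simplex (tau \<sigma>) \<and> g f \<in> realization K)"
    and W: "compact_space W" and h: "continuous_map W (realization_top L) h"
  shows "continuous_map W (realization_top K) (g \<circ> h)"
proof -
  obtain F where F: "finite F" "F \<subseteq> L" "h ` topspace W \<subseteq> (\<Union>\<sigma>\<in>F. closed_simplex \<sigma>)"
    using cpt_fin[OF L W h] by blast
  define S where "S = (\<Union>\<sigma>\<in>F. closed_simplex \<sigma>)"
  have "continuous_on S g" unfolding S_def
  proof (rule continuous_on_closed_Union[OF F(1)])
    show "closed (closed_simplex \<sigma>)" for \<sigma> by (rule closed_cs)
    show "continuous_on (closed_simplex \<sigma>) g" if "\<sigma> \<in> F" for \<sigma>
      using tau that F(2) by blast
  qed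
  then have cg: "continuous_map (top_of_set S) euclidean g" by simp
  have "continuous_map W euclidean h" by (rule cm_from_real[OF L h])
  then have "continuous_map W (top_of_set S) h"
    using F(3) unfolding S_def by (auto simp: continuous_map_in_subtopology)
  then have c1: "continuous_map W euclidean (g \<circ> h)"
    using continuous_map_compose cg by blast
  define F' where "F' = {\<rho> \<in> K. \<exists>\<sigma>\<in>F. \<rho> \<subseteq> tau \<sigma>}"
  have "F' \<subseteq> (\<Union>\<sigma>\<in>F. Pow (tau \<sigma>))" unfolding F'_def by blast
  moreover have "finite (\<Union>\<sigma>\<in>F. Pow (tau \<sigma>))"
  proof (rule finite_UN_I[OF F(1)])
    fix \<sigma> assume "\<sigma> \<in> F"
    then have "tau \<sigma> \<in> L" using tau F(2) by blast
    then show "finite (Pow (tau \<sigma>))" using simpcx_fin[OF L] by blast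
  qed
  ultimately have fF': "finite F'" by (rule finite_subset)
  have im: "(g \<circ> h) ` topspace W \<subseteq> (\<Union>\<rho>\<in>F'. closed_simplex \<rho>)"
  proof
    fix y assume "y \<in> (g \<circ> h) ` topspace W"
    then obtain x where x: "x \<in> topspace W" "y = g (h x)" by auto
    then obtain \<sigma> where s: "\<sigma> \<in> F" "h x \<in> closed_simplex \<sigma>" using F(3) by blast
    then have "\<sigma> \<in> L" using F(2) by blast
    then have y1: "y \<in> closed_simplex (tau \<sigma>)" "y \<in> realization K" using tau s x by blast+
    then have "spt y \<in> F'" unfolding F'_def using real_cs(2)[OF y1(2)] spt_cs[OF y1(1)] s(1) by blast
    then show "y \<in> (\<Union>\<rho>\<in>F'. closed_simplex \<rho>)" using real_cs(1)[OF y1(2)] by blast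
  qed
  show ?thesis
    by (rule cm_into_real[OF K c1 fF' _ im]) (simp add: F'_def)
qed



lemma compact_01: "compact_space (top_of_set {0..1::real})"
  by (rule compact_space_subtopology) simp

lemma compact_cube: "compact_space (cube_top n)"
proof -
  have "cube n = Pi\<^sub>E UNIV (\<lambda>i. if i < n then {0..1} else {0::real})"
    unfolding cube_def PiE_UNIV_domain by (auto simp: Pi_iff split: if_splits)
  moreover have "compactin (powertop_real UNIV) (Pi\<^sub>E UNIV (\<lambda>i. if i < n then {0..1} else {0::real}))"
    by (subst compactin_PiE) auto
  ultimately show ?thesis unfolding cube_top_def by (simp add: compact_space_subtopology)
qed

lemma compact_prod01: "compact_space W \<Longrightarrow> compact_space (prod_topology (top_of_set {0..1::real}) W)"
  using compact_01 compact_space_prod_topology by blast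

lemma fst01: "continuous_map (prod_topology (top_of_set {0..1::real}) W) euclideanreal fst"
  using continuous_map_compose[OF continuous_map_fst continuous_map_from_subtopology[OF continuous_map_id]]
  by (simp add: o_def)

lemma seg_cont:
  assumes K: "simpcx K" and L: "simpcx L"
    and tau: "\<And>\<sigma>. \<sigma> \<in> L \<Longrightarrow> tau \<sigma> \<in> L \<and> \<sigma> \<subseteq> tau \<sigma> \<and> continuous_on (closed_simplex \<sigma>) g \<and>
                (\<forall>f\<in>closed_simplex \<sigma>. g f \<in> closed_simplex (tau \<sigma>) \<and> g f \<in> realization K)"
    and W: "compact_space W" and h: "continuous_map W (realization_top L) h"
  shows "continuous_map (prod_topology (top_of_set {0..1}) W) (realization_top L)
           (\<lambda>p. (\<lambda>a. (1 - fst p) * g (h (snd p)) a + fst p * h (snd p) a))"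
proof -
  obtain F where F: "finite F" "F \<subseteq> L" "h ` topspace W \<subseteq> (\<Union>\<sigma>\<in>F. closed_simplex \<sigma>)"
    using cpt_fin[OF L W h] by blast
  have cgh: "continuous_map W euclidean (g \<circ> h)"
    using cm_from_real[OF K g_comp[OF K L tau W h]] .
  have c1: "continuous_map (prod_topology (top_of_set {0..1}) W) euclideanreal (\<lambda>p. g (h (snd p)) a)" for a
    using cm_comp[OF continuous_map_compose[OF continuous_map_snd cgh], where a=a] by (simp add: o_def)
  have c2: "continuous_map (prod_topology (top_of_set {0..1}) W) euclideanreal (\<lambda>p. h (snd p) a)" for a
    using cm_comp[OF continuous_map_compose[OF continuous_map_snd cm_from_real[OF L h]], where a=a] by (simp add: o_def)
  have cont: "continuous_map (prod_topology (top_of_set {0..1}) W) euclidean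
           (\<lambda>p. (\<lambda>a. (1 - fst p) * g (h (snd p)) a + fst p * h (snd p) a))"
  proof (rule cm_of_comp)
    fix a
    show "continuous_map (prod_topology (top_of_set {0..1}) W) euclideanreal
           (\<lambda>p. (1 - fst p) * g (h (snd p)) a + fst p * h (snd p) a)"
      by (intro continuous_map_add continuous_map_real_mult continuous_map_diff continuous_map_const[THEN iffD2]
            fst01 c1 c2) simp
  qed
  have im: "(\<lambda>p. (\<lambda>a. (1 - fst p) * g (h (snd p)) a + fst p * h (snd p) a)) ` topspace (prod_topology (top_of_set {0..1}) W)
       \<subseteq> (\<Union>\<sigma>\<in>tau ` F. closed_simplex \<sigma>)"
  proof
    fix y assume "y \<in> (\<lambda>p. (\<lambda>a. (1 - fst p) * g (h (snd p)) a + fst p * h (snd p) a)) ` topspace (prod_topology (top_of_set {0..1}) W)"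
    then obtain t x where tx: "t \<in> {0..1}" "x \<in> topspace W" "y = (\<lambda>a. (1 - t) * g (h x) a + t * h x a)"
      by auto
    then obtain \<sigma> where s: "\<sigma> \<in> F" "h x \<in> closed_simplex \<sigma>" using F(3) by blast
    then have sL: "\<sigma> \<in> L" using F(2) by blast
    have "h x \<in> closed_simplex (tau \<sigma>)"
      using cs_mono[OF _ _ s(2)] tau[OF sL] simpcx_fin[OF L] by blast
    moreover have "g (h x) \<in> closed_simplex (tau \<sigma>)" using tau[OF sL] s by blast
    ultimately have "y \<in> closed_simplex (tau \<sigma>)" using tx cs_comb[of "g (h x)" "tau \<sigma>" "h x" t] by simp
    then show "y \<in> (\<Union>\<sigma>\<in>tau ` F. closed_simplex \<sigma>)" using s by blast
  qed
  show ?thesis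
    by (rule cm_into_real[OF L cont _ _ im]) (use F tau in auto)
qed



lemma real_mono: "K \<subseteq> L \<Longrightarrow> realization K \<subseteq> realization L"
  unfolding realization_def by blast

lemma weq_abstract:
  assumes K: "simpcx K" and L: "simpcx L" and KL: "K \<subseteq> L"
    and gK: "\<And>f. f \<in> realization K \<Longrightarrow> g f = f"
    and tau: "\<And>\<sigma>. \<sigma> \<in> L \<Longrightarrow> tau \<sigma> \<in> L \<and> \<sigma> \<subseteq> tau \<sigma> \<and> continuous_map (top_of_set (closed_simplex \<sigma>)) euclidean g \<and>
                (\<forall>f\<in>closed_simplex \<sigma>. g f \<in> closed_simplex (tau \<sigma>) \<and> g f \<in> realization K)"
  shows "weak_homotopy_equivalence (realization_top K) (realization_top L) id"
proof -
  have tau': "\<And>\<sigma>. \<sigma> \<in> L \<Longrightarrow> tau \<sigma> \<in> L \<and> \<sigma> \<subseteq> tau \<sigma> \<and> continuous_on (closed_simplex \<sigma>) g \<and>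
                (\<forall>f\<in>closed_simplex \<sigma>. g f \<in> closed_simplex (tau \<sigma>) \<and> g f \<in> realization K)"
    using tau by simp
  note tK = topspace_real[OF K] and tL = topspace_real[OF L]
  have gL: "g y \<in> realization K" if "y \<in> realization L" for y
  proof -
    have "\<forall>f\<in>closed_simplex (spt y). g f \<in> closed_simplex (tau (spt y)) \<and> g f \<in> realization K"
      using tau'[OF real_cs(2)[OF that]] by (elim conjE)
    then show ?thesis using real_cs(1)[OF that] by blast
  qed
  have c_id: "continuous_map (realization_top K) (realization_top L) id"
    unfolding continuous_map_def
  proof (intro conjI allI impI)
    show "id \<in> topspace (realization_top K) \<rightarrow> topspace (realization_top L)"
      using real_mono[OF KL] tK tL by auto
    fix U assume "openin (realization_top L) U"
    then have U: "realization_open L U" by (simp add: open_real)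
    have "realization_open K (realization K \<inter> U)"
      unfolding realization_open_def
    proof (intro conjI ballI)
      fix \<sigma> assume s: "\<sigma> \<in> K"
      then have e: "realization K \<inter> U \<inter> closed_simplex \<sigma> = U \<inter> closed_simplex \<sigma>"
        using cs_sub_real[OF K s] by blast
      show "openin (subtopology (powertop_real UNIV) (closed_simplex \<sigma>)) (realization K \<inter> U \<inter> closed_simplex \<sigma>)"
        unfolding e using U KL s unfolding realization_open_def by (meson subsetD)
    qed simp
    moreover have "{x \<in> topspace (realization_top K). id x \<in> U} = realization K \<inter> U"
      using tK by auto
    ultimately show "openin (realization_top K) {x \<in> topspace (realization_top K). id x \<in> U}"
      by (simp only: open_real)
  qed
  have path: "path_component_of (realization_top L) (g y) y" if y: "y \<in> realization L" for y
  proof -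
    define p where "p t = (\<lambda>a. (1 - t) * g y a + t * y a)" for t
    have sL: "spt y \<in> L" and ycs: "y \<in> closed_simplex (spt y)" using real_cs[OF y] by auto
    have c: "continuous_map (top_of_set {0..1::real}) euclidean p"
    proof (rule cm_of_comp)
      fix a
      have "continuous_on {0..1} (\<lambda>t. (1 - t) * g y a + t * y a)"
        by (intro continuous_intros)
      then show "continuous_map (top_of_set {0..1::real}) euclideanreal (\<lambda>t. p t a)"
        unfolding p_def by simp
    qed
    have im: "p ` topspace (top_of_set {0..1::real}) \<subseteq> (\<Union>\<sigma>\<in>{tau (spt y)}. closed_simplex \<sigma>)"
    proof
      fix z assume "z \<in> p ` topspace (top_of_set {0..1::real})"
      then obtain t where t: "t \<in> {0..1}" "z = p t" by auto
      have "y \<in> closed_simplex (tau (spt y))"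
        using cs_mono[OF _ _ ycs] tau'[OF sL] simpcx_fin[OF L] by blast
      moreover have "g y \<in> closed_simplex (tau (spt y))" using tau'[OF sL] ycs by blast
      ultimately have "z \<in> closed_simplex (tau (spt y))"
        using t cs_comb[of "g y" "tau (spt y)" y t] unfolding p_def by simp
      then show "z \<in> (\<Union>\<sigma>\<in>{tau (spt y)}. closed_simplex \<sigma>)" by simp
    qed
    have "{tau (spt y)} \<subseteq> L" using tau'[OF sL] by simp
    then have "continuous_map (top_of_set {0..1::real}) (realization_top L) p"
      using cm_into_real[OF L c _ _ im] by simp
    moreover have "p 0 = g y" "p 1 = y" unfolding p_def by (simp_all add: fun_eq_iff)
    ultimately show ?thesis unfolding path_component_of_def pathin_def by blast
  qed
  show ?thesis
    unfolding weak_homotopy_equivalence_def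
  proof (intro conjI ballI allI impI)
    show "continuous_map (realization_top K) (realization_top L) id" by (rule c_id)
  next
    fix y assume "y \<in> topspace (realization_top L)"
    then have y: "y \<in> realization L" using tL by simp
    show "\<exists>x\<in>topspace (realization_top K). path_component_of (realization_top L) (id x) y"
      using path[OF y] gL[OF y] tK by auto
  next
    fix x x' assume x: "x \<in> topspace (realization_top K)" and x': "x' \<in> topspace (realization_top K)"
      and pc: "path_component_of (realization_top L) (id x) (id x')"
    then obtain q where q: "pathin (realization_top L) q" "q 0 = x" "q 1 = x'"
      unfolding path_component_of_def by auto
    have "continuous_map (top_of_set {0..1::real}) (realization_top K) (g \<circ> q)"
      using g_comp[OF K L tau' compact_01] q(1) unfolding pathin_def by blast
    moreover have "(g \<circ> q) 0 = x" "(g \<circ> q) 1 = x'" using q gK x x' tK by auto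
    ultimately show "path_component_of (realization_top K) x x'"
      unfolding path_component_of_def pathin_def by blast
  next
    fix n :: nat and x0 assume x0: "x0 \<in> topspace (realization_top K)"
    have gx0: "g x0 = x0" using gK x0 tK by simp
    have tc: "topspace (cube_top n) = cube n" unfolding cube_top_def by simp
    have bc: "cube_boundary n \<subseteq> cube n" unfolding cube_boundary_def by blast
    have Presp: "(\<And>x. x \<in> topspace (cube_top n) \<Longrightarrow> h x = k x) \<Longrightarrow>
        (\<forall>t\<in>cube_boundary n. h t = x0) \<longleftrightarrow> (\<forall>t\<in>cube_boundary n. k t = x0)" for h k
      using bc tc by (metis subsetD)
    have HW: "homotopic_with (\<lambda>h. \<forall>t\<in>cube_boundary n. h t = x0) (cube_top n) Y p q \<longleftrightarrow>
           (\<exists>h. continuous_map (prod_topology (top_of_set {0..1::real}) (cube_top n)) Y h \<and>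
              (\<forall>x \<in> topspace (cube_top n). h(0,x) = p x) \<and>
              (\<forall>x \<in> topspace (cube_top n). h(1,x) = q x) \<and>
              (\<forall>t \<in> {0..1}. \<forall>s\<in>cube_boundary n. h (t, s) = x0))" for Y :: "('a \<Rightarrow> real) topology" and p q
      by (rule homotopic_with) (rule Presp)
    show "induces_bij_pi (realization_top K) (realization_top L) id n x0"
      unfolding induces_bij_pi_def
    proof (intro conjI allI impI)
      fix \<beta> assume b: "based_cube_map (realization_top L) (id x0) n \<beta>"
      then have bc1: "continuous_map (cube_top n) (realization_top L) \<beta>"
        and bc2: "\<forall>t\<in>cube_boundary n. \<beta> t = x0"
        unfolding based_cube_map_def by auto
      have a1: "continuous_map (cube_top n) (realization_top K) (g \<circ> \<beta>)"
        by (rule g_comp[OF K L tau' compact_cube bc1])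
      have "based_cube_map (realization_top K) x0 n (g \<circ> \<beta>)"
        unfolding based_cube_map_def using a1 bc2 gx0 by simp
      moreover have "homotopic_rel_boundary (realization_top L) (id x0) n (id \<circ> (g \<circ> \<beta>)) \<beta>"
        unfolding homotopic_rel_boundary_def id_apply id_comp
      proof (subst HW)
        define H where "H = (\<lambda>p. (\<lambda>a. (1 - fst p) * g (\<beta> (snd p)) a + fst p * \<beta> (snd p) a))"
        have "continuous_map (prod_topology (top_of_set {0..1::real}) (cube_top n)) (realization_top L) H"
          unfolding H_def by (rule seg_cont[OF K L tau' compact_cube bc1])
        moreover have "\<forall>x\<in>topspace (cube_top n). H (0, x) = (g \<circ> \<beta>) x" by (simp add: H_def)
        moreover have "\<forall>x\<in>topspace (cube_top n). H (1, x) = \<beta> x" by (simp add: H_def)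
        moreover have "\<forall>t\<in>{0..1}. \<forall>s\<in>cube_boundary n. H (t, s) = x0"
        proof (intro ballI)
          fix t s assume "s \<in> cube_boundary n"
          then have e: "\<beta> s = x0" using bc2 by blast
          show "H (t, s) = x0" by (simp add: H_def e gx0 algebra_simps)
        qed
        ultimately show "\<exists>h. continuous_map (prod_topology (top_of_set {0..1::real}) (cube_top n)) (realization_top L) h \<and>
          (\<forall>x\<in>topspace (cube_top n). h (0, x) = (g \<circ> \<beta>) x) \<and>
          (\<forall>x\<in>topspace (cube_top n). h (1, x) = \<beta> x) \<and>
          (\<forall>t\<in>{0..1}. \<forall>s\<in>cube_boundary n. h (t, s) = x0)"
          by - (rule exI[of _ H], simp)
      qed
      ultimately show "\<exists>\<alpha>. based_cube_map (realization_top K) x0 n \<alpha> \<and>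
                homotopic_rel_boundary (realization_top L) (id x0) n (id \<circ> \<alpha>) \<beta>" by - (rule exI[of _ "g \<circ> \<beta>"], simp)
    next
      fix \<alpha> \<alpha>' assume a: "based_cube_map (realization_top K) x0 n \<alpha>"
        and a': "based_cube_map (realization_top K) x0 n \<alpha>'"
        and hom: "homotopic_rel_boundary (realization_top L) (id x0) n (id \<circ> \<alpha>) (id \<circ> \<alpha>')"
      have ac: "continuous_map (cube_top n) (realization_top K) \<alpha>"
        and ac': "continuous_map (cube_top n) (realization_top K) \<alpha>'"
        using a a' unfolding based_cube_map_def by auto
      have aK: "\<alpha> x \<in> realization K" "\<alpha>' x \<in> realization K" if "x \<in> topspace (cube_top n)" for x
        using continuous_map_image_subset_topspace[OF ac] continuous_map_image_subset_topspace[OF ac'] that tK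
        by (simp_all add: image_subset_iff)
      have hom': "\<exists>H. continuous_map (prod_topology (top_of_set {0..1::real}) (cube_top n)) (realization_top L) H \<and>
        (\<forall>x\<in>topspace (cube_top n). H (0, x) = \<alpha> x) \<and>
        (\<forall>x\<in>topspace (cube_top n). H (1, x) = \<alpha>' x) \<and>
        (\<forall>t\<in>{0..1}. \<forall>s\<in>cube_boundary n. H (t, s) = x0)"
        using hom[unfolded homotopic_rel_boundary_def id_apply id_comp HW] .
      then obtain H where H: "continuous_map (prod_topology (top_of_set {0..1::real}) (cube_top n)) (realization_top L) H"
        "\<forall>x\<in>topspace (cube_top n). H (0, x) = \<alpha> x"
        "\<forall>x\<in>topspace (cube_top n). H (1, x) = \<alpha>' x"
        "\<forall>t\<in>{0..1}. \<forall>s\<in>cube_boundary n. H (t, s) = x0"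
        by (elim exE conjE)
      show "homotopic_rel_boundary (realization_top K) x0 n \<alpha> \<alpha>'"
        unfolding homotopic_rel_boundary_def id_apply id_comp
      proof (subst HW)
        have "continuous_map (prod_topology (top_of_set {0..1::real}) (cube_top n)) (realization_top K) (g \<circ> H)"
          by (rule g_comp[OF K L tau' compact_prod01[OF compact_cube] H(1)])
        moreover have "\<forall>x\<in>topspace (cube_top n). (g \<circ> H) (0, x) = \<alpha> x"
          using H(2) aK(1) gK by simp
        moreover have "\<forall>x\<in>topspace (cube_top n). (g \<circ> H) (1, x) = \<alpha>' x"
          using H(3) aK(2) gK by simp
        moreover have "\<forall>t\<in>{0..1}. \<forall>s\<in>cube_boundary n. (g \<circ> H) (t, s) = x0"
          using H(4) gx0 by simp
        ultimately show "\<exists>h. continuous_map (prod_topology (top_of_set {0..1::real}) (cube_top n)) (realization_top K) h \<and>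
          (\<forall>x\<in>topspace (cube_top n). h (0, x) = \<alpha> x) \<and>
          (\<forall>x\<in>topspace (cube_top n). h (1, x) = \<alpha>' x) \<and>
          (\<forall>t\<in>{0..1}. \<forall>s\<in>cube_boundary n. h (t, s) = x0)"
          by - (rule exI[of _ "g \<circ> H"], simp)
      qed
    qed
  qed
qed



definition ssum :: "'a set \<Rightarrow> ('a \<Rightarrow> real) \<Rightarrow> real" where
  "ssum B f = sum f ({x. f x \<noteq> 0} \<inter> B)"

definition cc :: "'a set \<Rightarrow> 'a set \<Rightarrow> ('a \<Rightarrow> real) \<Rightarrow> 'a \<Rightarrow> real" where
  "cc P Q f x = (if x \<in> P then min (f x) (ssum Q f) else if x \<in> Q then min (f x) (ssum P f) else 0)"

definition gg :: "'a set \<Rightarrow> 'a set \<Rightarrow> 'a \<Rightarrow> ('a \<Rightarrow> real) \<Rightarrow> ('a \<Rightarrow> real)" where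
  "gg P Q v f = (\<lambda>x. f x - cc P Q f x + (if x = v then sum (cc P Q f) {x. f x \<noteq> 0} else 0))"

lemma cs_nonneg: "f \<in> closed_simplex T \<Longrightarrow> 0 \<le> f x"
  unfolding closed_simplex_def by simp

lemma cs_zero: "f \<in> closed_simplex T \<Longrightarrow> x \<notin> T \<Longrightarrow> f x = 0"
  unfolding closed_simplex_def by simp

lemma cs_sum: "f \<in> closed_simplex T \<Longrightarrow> sum f T = 1"
  unfolding closed_simplex_def by simp

lemma spt_sub: "f \<in> closed_simplex T \<Longrightarrow> {x. f x \<noteq> 0} \<subseteq> T"
  using cs_zero[of f T] by blast

lemma ssum_eq:
  assumes T: "finite T" and f: "f \<in> closed_simplex T"
  shows "ssum B f = sum f (T \<inter> B)"
  unfolding ssum_def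
proof (rule sum.mono_neutral_left)
  show "finite (T \<inter> B)" using T by simp
  show "{x. f x \<noteq> 0} \<inter> B \<subseteq> T \<inter> B" using spt_sub[OF f] by blast
  show "\<forall>i\<in>T \<inter> B - {x. f x \<noteq> 0} \<inter> B. f i = 0" by blast
qed

lemma ssum_nonneg: "f \<in> closed_simplex T \<Longrightarrow> 0 \<le> ssum B f"
  unfolding ssum_def by (intro sum_nonneg) (simp add: cs_nonneg)

lemma cc_bounds:
  assumes f: "f \<in> closed_simplex T"
  shows "0 \<le> cc P Q f x" "cc P Q f x \<le> f x" "f x = 0 \<Longrightarrow> cc P Q f x = 0"
proof -
  have a: "0 \<le> f x" "0 \<le> ssum P f" "0 \<le> ssum Q f"
    using cs_nonneg[OF f, of x] ssum_nonneg[OF f, of P] ssum_nonneg[OF f, of Q] by simp_all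
  show "0 \<le> cc P Q f x" unfolding cc_def using a by simp
  show "cc P Q f x \<le> f x" unfolding cc_def using a by simp
  show "f x = 0 \<Longrightarrow> cc P Q f x = 0" unfolding cc_def using a by simp
qed

lemma cc_sum:
  assumes T: "finite T" and f: "f \<in> closed_simplex T"
  shows "sum (cc P Q f) {x. f x \<noteq> 0} = sum (cc P Q f) T"
proof (rule sum.mono_neutral_left[OF T spt_sub[OF f]])
  show "\<forall>i\<in>T - {x. f x \<noteq> 0}. cc P Q f i = 0" using cc_bounds(3)[OF f] by blast
qed

lemma cc_sym: "P \<inter> Q = {} \<Longrightarrow> cc P Q = cc Q P"
  unfolding cc_def by (auto simp: fun_eq_iff)

lemma gg_sym:
  assumes "P \<inter> Q = {}" shows "gg P Q v = gg Q P v"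
proof -
  have e: "cc P Q = cc Q P" by (rule cc_sym[OF assms])
  show ?thesis unfolding gg_def e ..
qed

lemma gg_cs:
  assumes T: "finite T" and f: "f \<in> closed_simplex T"
  shows "gg P Q v f \<in> closed_simplex (insert v T)"
proof -
  let ?c = "cc P Q f"
  let ?R = "sum ?c {x. f x \<noteq> 0}"
  have R: "?R = sum ?c T" by (rule cc_sum[OF T f])
  have Rn: "0 \<le> ?R" unfolding R by (intro sum_nonneg cc_bounds(1)[OF f])
  have f': "f \<in> closed_simplex (insert v T)" using cs_mono[OF _ _ f] T by blast
  have R': "?R = sum ?c (insert v T)" using cc_sum[OF _ f', of P Q] T by simp
  have nn: "0 \<le> gg P Q v f x" for x
    using cc_bounds(2)[OF f, of P Q x] Rn unfolding gg_def by auto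
  have z: "gg P Q v f x = 0" if "x \<notin> insert v T" for x
    using that cs_zero[OF f, of x] cc_bounds(3)[OF f, of x P Q] unfolding gg_def by auto
  have "sum (gg P Q v f) (insert v T) = sum f (insert v T) - sum ?c (insert v T) + sum (\<lambda>x. if x = v then ?R else 0) (insert v T)"
    unfolding gg_def by (simp add: sum.distrib sum_subtractf)
  also have "\<dots> = 1" using cs_sum[OF f'] R' T by simp
  finally show ?thesis unfolding closed_simplex_def using nn z by blast
qed

lemma gg_kill:
  assumes T: "finite T" and f: "f \<in> closed_simplex T" and le: "ssum P f \<le> ssum Q f"
    and x: "x \<in> P" and v: "v \<notin> P"
  shows "gg P Q v f x = 0"
proof -
  have "f x \<le> ssum P f"
  proof (cases "f x = 0")
    case True then show ?thesis using ssum_nonneg[OF f] by simp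
  next
    case False
    then have "x \<in> T \<inter> P" using spt_sub[OF f] x by blast
    then have "f x \<le> sum f (T \<inter> P)"
      using T by (intro member_le_sum) (auto simp: cs_nonneg[OF f])
    then show ?thesis using ssum_eq[OF T f] by simp
  qed
  then have "cc P Q f x = f x" using le x unfolding cc_def by simp
  moreover have "x \<noteq> v" using x v by blast
  ultimately show ?thesis unfolding gg_def by simp
qed

lemma gg_id:
  assumes T: "finite T" and f: "f \<in> closed_simplex T" and TQ: "T \<inter> Q = {}"
  shows "gg P Q v f = f"
proof -
  have sQ: "ssum Q f = 0" using ssum_eq[OF T f, of Q] TQ by simp
  have c0: "cc P Q f x = 0" for x
  proof (cases "x \<in> P")
    case True then show ?thesis using sQ cs_nonneg[OF f, of x] unfolding cc_def by simp
  next
    case False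
    show ?thesis
    proof (cases "x \<in> Q")
      case True
      then have "f x = 0" using cs_zero[OF f] TQ by blast
      then show ?thesis using cc_bounds(3)[OF f] by blast
    next
      case False2: False
      then show ?thesis using False unfolding cc_def by simp
    qed
  qed
  show ?thesis unfolding gg_def using c0 by (simp add: fun_eq_iff)
qed

lemma cont_coord: "continuous_on S (\<lambda>f::'a \<Rightarrow> real. f x)"
  by (rule continuous_on_subset[OF continuous_on_product_coordinates]) simp

lemma gg_cont:
  assumes T: "finite T"
  shows "continuous_on (closed_simplex T) (gg P Q v)"
proof -
  define c' where "c' f x = (if x \<in> P then min (f x) (sum f (T \<inter> Q)) else if x \<in> Q then min (f x) (sum f (T \<inter> P)) else 0)"
    for f :: "'a \<Rightarrow> real" and x
  define g' where "g' f = (\<lambda>x. f x - c' f x + (if x = v then sum (c' f) T else 0))" for f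
  have cc': "cc P Q f = c' f" if f: "f \<in> closed_simplex T" for f
    unfolding cc_def c'_def using ssum_eq[OF T f] by (simp add: fun_eq_iff)
  have eq: "gg P Q v f = g' f" if f: "f \<in> closed_simplex T" for f
  proof -
    have e1: "cc P Q f = c' f" by (rule cc'[OF f])
    have e2: "sum (cc P Q f) {x. f x \<noteq> 0} = sum (c' f) T" using cc_sum[OF T f, of P Q] e1 by simp
    show ?thesis unfolding gg_def g'_def e2 by (simp only: e1)
  qed
  have cs: "continuous_on (closed_simplex T) (\<lambda>f. sum f B)" for B
    by (intro continuous_on_sum cont_coord)
  have cc: "continuous_on (closed_simplex T) (\<lambda>f. c' f x)" for x
  proof (cases "x \<in> P")
    case True
    then show ?thesis unfolding c'_def by (simp add: continuous_on_min[OF cont_coord cs])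
  next
    case False
    then show ?thesis
    proof (cases "x \<in> Q")
      case True
      then show ?thesis using False unfolding c'_def by (simp add: continuous_on_min[OF cont_coord cs])
    next
      case False2: False
      then show ?thesis using False unfolding c'_def by simp
    qed
  qed
  have "continuous_on (closed_simplex T) g'"
  proof (rule continuous_on_coordinatewise_then_product)
    fix x
    have s: "continuous_on (closed_simplex T) (\<lambda>f. sum (c' f) T)"
      by (rule continuous_on_sum) (rule cc)
    show "continuous_on (closed_simplex T) (\<lambda>f. g' f x)"
    proof (cases "x = v")
      case True
      then show ?thesis unfolding g'_def
        by (simp only: if_True refl) (intro continuous_on_add continuous_on_diff cont_coord cc s)
    next
      case False
      then show ?thesis unfolding g'_def
        by (simp only: if_False) (intro continuous_on_add continuous_on_diff cont_coord cc continuous_on_const)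
    qed
  qed
  moreover have "continuous_on (closed_simplex T) (gg P Q v) = continuous_on (closed_simplex T) g'"
    by (rule continuous_on_cong[OF refl eq])
  ultimately show ?thesis by simp
qed



lemma VR_iff: "\<sigma> \<in> VR d r B \<longleftrightarrow> finite \<sigma> \<and> \<sigma> \<noteq> {} \<and> \<sigma> \<subseteq> B \<and> (\<forall>x\<in>\<sigma>. \<forall>y\<in>\<sigma>. d x y \<le> ennreal r)"
  unfolding VR_def by simp

lemma simpcx_VR: "simpcx (VR d r B)"
  unfolding simpcx_def
proof (intro ballI conjI allI impI)
  fix \<sigma> assume s: "\<sigma> \<in> VR d r B"
  then show "finite \<sigma>" "\<sigma> \<noteq> {}" by (simp_all add: VR_iff)
  fix \<tau> assume t: "\<tau> \<subseteq> \<sigma>" "\<tau> \<noteq> {}"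
  have "finite \<tau>" using t(1) \<open>finite \<sigma>\<close> by (rule finite_subset)
  moreover have "\<tau> \<subseteq> B" using s t(1) by (simp add: VR_iff) blast
  moreover have "\<forall>x\<in>\<tau>. \<forall>y\<in>\<tau>. d x y \<le> ennreal r" using s t(1) by (simp add: VR_iff) blast
  ultimately show "\<tau> \<in> VR d r B" using t(2) by (simp add: VR_iff)
qed

lemma simpcx_Un: "simpcx K \<Longrightarrow> simpcx L \<Longrightarrow> simpcx (K \<union> L)"
  unfolding simpcx_def by blast

lemma VR_restrict: "\<sigma> \<in> VR d r C \<Longrightarrow> \<sigma> \<subseteq> B \<Longrightarrow> \<sigma> \<in> VR d r B"
  by (simp add: VR_iff)

lemma VR_mono: "B \<subseteq> C \<Longrightarrow> VR d r B \<subseteq> VR d r C"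
  unfolding VR_def by blast

lemma key_insert:
  fixes d :: "'a \<Rightarrow> 'a \<Rightarrow> ennreal" and Z X Y A :: "'a set" and r :: real and v :: 'a
  assumes d_sym: "\<And>x y. x \<in> Z \<Longrightarrow> y \<in> Z \<Longrightarrow> d x y = d y x"
    and d_refl: "\<And>x. x \<in> Z \<Longrightarrow> d x x = 0"
    and cover: "X \<union> Y = Z"
    and A_def: "A = X \<inter> Y"
    and vA: "v \<in> A"
    and v_cone: "\<And>x y. x \<in> X - A \<Longrightarrow> y \<in> Y - A \<Longrightarrow> d x y \<le> ennreal r \<Longrightarrow>
                   d x v \<le> ennreal r \<and> d y v \<le> ennreal r"
    and extra: "(\<forall>x\<in>X - A. \<forall>y\<in>Y - A. d x y \<le> ennreal r \<longrightarrow>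
                   (\<forall>w\<in>A. d w x \<le> ennreal r \<and> d w y \<le> ennreal r \<longrightarrow> d v w \<le> ennreal r))
               \<or> diam_d d A \<le> ennreal r
               \<or> A = {v}"
    and s: "\<sigma> \<in> VR d r Z" and nX: "\<not> \<sigma> \<subseteq> X" and nY: "\<not> \<sigma> \<subseteq> Y"
  shows "insert v \<sigma> \<in> VR d r Z"
proof -
  have sZ: "\<sigma> \<subseteq> Z" and fin: "finite \<sigma>" and pw: "\<And>a b. a \<in> \<sigma> \<Longrightarrow> b \<in> \<sigma> \<Longrightarrow> d a b \<le> ennreal r"
    using s by (simp_all add: VR_iff)
  have vZ: "v \<in> Z" using vA A_def cover by blast
  obtain x where x: "x \<in> \<sigma>" "x \<notin> Y" using nY by blast
  then have xP: "x \<in> X - A" using sZ cover A_def by blast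
  obtain y where y: "y \<in> \<sigma>" "y \<notin> X" using nX by blast
  then have yQ: "y \<in> Y - A" using sZ cover A_def by blast
  have dxy: "d x y \<le> ennreal r" using pw x(1) y(1) by blast
  have dzv: "d z v \<le> ennreal r" if z: "z \<in> \<sigma>" for z
  proof -
    have zZ: "z \<in> Z" using z sZ by blast
    show ?thesis
    proof (cases "z \<in> X - A")
      case True
      then show ?thesis using v_cone[OF True yQ pw[OF z y(1)]] by blast
    next
      case False
      show ?thesis
      proof (cases "z \<in> Y - A")
        case True
        then show ?thesis using v_cone[OF xP True pw[OF x(1) z]] by blast
      next
        case False2: False
        then have zA: "z \<in> A" using False zZ cover A_def by blast
        have "d v z \<le> ennreal r"
        proof -
          consider (c1) "\<forall>x\<in>X - A. \<forall>y\<in>Y - A. d x y \<le> ennreal r \<longrightarrow>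
                   (\<forall>w\<in>A. d w x \<le> ennreal r \<and> d w y \<le> ennreal r \<longrightarrow> d v w \<le> ennreal r)"
            | (c2) "diam_d d A \<le> ennreal r" | (c3) "A = {v}" using extra by blast
          then show ?thesis
          proof cases
            case c1
            then show ?thesis using xP yQ dxy zA pw[OF z x(1)] pw[OF z y(1)] by blast
          next
            case c2
            have "d v z \<in> {d a b | a b. a \<in> A \<and> b \<in> A}" using vA zA by blast
            then have "d v z \<le> diam_d d A" unfolding diam_d_def by (rule Sup_upper)
            then show ?thesis using c2 by (rule order.trans)
          next
            case c3
            then have "z = v" using zA by blast
            then show ?thesis using d_refl[OF vZ] by simp
          qed
        qed
        then show ?thesis using d_sym[OF zZ vZ] by simp
      qed
    qed
  qed
  have "\<forall>a\<in>insert v \<sigma>. \<forall>b\<in>insert v \<sigma>. d a b \<le> ennreal r"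
  proof (intro ballI)
    fix a b assume a: "a \<in> insert v \<sigma>" and b: "b \<in> insert v \<sigma>"
    show "d a b \<le> ennreal r"
    proof (cases "a = v")
      case True
      show ?thesis
      proof (cases "b = v")
        case True
        then show ?thesis using \<open>a = v\<close> d_refl[OF vZ] by simp
      next
        case False
        then have "b \<in> \<sigma>" using b by blast
        then show ?thesis using dzv[of b] d_sym[of b v] sZ vZ \<open>a = v\<close> by auto
      qed
    next
      case False
      then have aS: "a \<in> \<sigma>" using a by blast
      show ?thesis
      proof (cases "b = v")
        case True
        then show ?thesis using dzv[OF aS] by simp
      next
        case False
        then have "b \<in> \<sigma>" using b by blast
        then show ?thesis using pw aS by blast
      qed
    qed
  qed
  then show ?thesis using fin sZ vZ by (simp add: VR_iff)
qed

theorem proposition10p5: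
  fixes d :: "'a \<Rightarrow> 'a \<Rightarrow> ennreal" and Z X Y A :: "'a set" and r :: real and v :: 'a
  assumes d_sym: "\<And>x y. x \<in> Z \<Longrightarrow> y \<in> Z \<Longrightarrow> d x y = d y x"
    and d_refl: "\<And>x. x \<in> Z \<Longrightarrow> d x x = 0"
    and cover: "X \<union> Y = Z"
    and A_def: "A = X \<inter> Y"
    and r_nonneg: "0 \<le> r"
    and vA: "v \<in> A"
    and v_cone: "\<And>x y. x \<in> X - A \<Longrightarrow> y \<in> Y - A \<Longrightarrow> d x y \<le> ennreal r \<Longrightarrow>
                   d x v \<le> ennreal r \<and> d y v \<le> ennreal r"
    and extra: "(\<forall>x\<in>X - A. \<forall>y\<in>Y - A. d x y \<le> ennreal r \<longrightarrow>
                   (\<forall>w\<in>A. d w x \<le> ennreal r \<and> d w y \<le> ennreal r \<longrightarrow> d v w \<le> ennreal r))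
               \<or> diam_d d A \<le> ennreal r
               \<or> A = {v}"
  shows "weak_homotopy_equivalence
           (realization_top (VR d r X \<union> VR d r Y)) (realization_top (VR d r Z)) id"
proof -
  define K where "K = VR d r X \<union> VR d r Y"
  define L where "L = VR d r Z"
  define P where "P = X - A"
  define Q where "Q = Y - A"
  define g where "g = gg P Q v"
  define tau where "tau \<sigma> = (if \<sigma> \<subseteq> X \<or> \<sigma> \<subseteq> Y then \<sigma> else insert v \<sigma>)" for \<sigma>
  have PQ: "P \<inter> Q = {}" unfolding P_def Q_def A_def by blast
  have vP: "v \<notin> P" and vQ: "v \<notin> Q" using vA unfolding P_def Q_def by auto
  have gsym: "g = gg Q P v" unfolding g_def by (rule gg_sym[OF PQ])
  have K: "simpcx K" unfolding K_def by (intro simpcx_Un simpcx_VR)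
  have L: "simpcx L" unfolding L_def by (rule simpcx_VR)
  have XZ: "X \<subseteq> Z" and YZ: "Y \<subseteq> Z" using cover by blast+
  have KL: "K \<subseteq> L" unfolding K_def L_def using VR_mono[OF XZ] VR_mono[OF YZ] by blast
  have XP: "T \<inter> Q = {}" if "T \<subseteq> X" for T using that unfolding Q_def A_def by blast
  have YP: "T \<inter> P = {}" if "T \<subseteq> Y" for T using that unfolding P_def A_def by blast
  have good: "g f = f" if T: "finite T" and f: "f \<in> closed_simplex T" and TXY: "T \<subseteq> X \<or> T \<subseteq> Y" for T f
    using TXY
  proof
    assume "T \<subseteq> X"
    then show "g f = f" unfolding g_def using gg_id[OF T f XP] by blast
  next
    assume "T \<subseteq> Y"
    then show "g f = f" unfolding gsym using gg_id[OF T f YP] by blast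
  qed
  have gK: "g f = f" if f: "f \<in> realization K" for f
  proof -
    have sK: "spt f \<in> K" using real_cs(2)[OF f] .
    then have "finite (spt f)" using simpcx_fin[OF K] by blast
    moreover have "spt f \<subseteq> X \<or> spt f \<subseteq> Y" using sK unfolding K_def by (auto simp: VR_iff)
    ultimately show ?thesis using good real_cs(1)[OF f] by blast
  qed
  have tau: "tau \<sigma> \<in> L \<and> \<sigma> \<subseteq> tau \<sigma> \<and> continuous_map (top_of_set (closed_simplex \<sigma>)) euclidean g \<and>
                (\<forall>f\<in>closed_simplex \<sigma>. g f \<in> closed_simplex (tau \<sigma>) \<and> g f \<in> realization K)"
    if s: "\<sigma> \<in> L" for \<sigma>
  proof -
    have fin: "finite \<sigma>" and sZ: "\<sigma> \<subseteq> Z" using s unfolding L_def by (simp_all add: VR_iff)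
    have cont: "continuous_map (top_of_set (closed_simplex \<sigma>)) euclidean g"
      unfolding g_def using gg_cont[OF fin] by simp
    show ?thesis
    proof (cases "\<sigma> \<subseteq> X \<or> \<sigma> \<subseteq> Y")
      case True
      then have t: "tau \<sigma> = \<sigma>" unfolding tau_def by simp
      have sK: "\<sigma> \<in> K" using True s unfolding K_def L_def using VR_restrict by blast
      have "\<forall>f\<in>closed_simplex \<sigma>. g f \<in> closed_simplex (tau \<sigma>) \<and> g f \<in> realization K"
        using good[OF fin _ True] cs_sub_real[OF K sK] t by auto
      then show ?thesis using t s cont by simp
    next
      case False
      then have t: "tau \<sigma> = insert v \<sigma>" unfolding tau_def by simp
      have tL: "insert v \<sigma> \<in> L" unfolding L_def
        using key_insert[OF d_sym d_refl cover A_def vA v_cone extra] s False unfolding L_def by blast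
      have "\<forall>f\<in>closed_simplex \<sigma>. g f \<in> closed_simplex (insert v \<sigma>) \<and> g f \<in> realization K"
      proof
        fix f assume f: "f \<in> closed_simplex \<sigma>"
        have gc: "g f \<in> closed_simplex (insert v \<sigma>)" unfolding g_def by (rule gg_cs[OF fin f])
        have gL: "g f \<in> realization L" using cs_sub_real[OF L tL] gc by blast
        have sptL: "spt (g f) \<in> L" using real_cs(2)[OF gL] .
        have sub: "spt (g f) \<subseteq> insert v \<sigma>" using spt_cs[OF gc] .
        have "spt (g f) \<subseteq> X \<or> spt (g f) \<subseteq> Y"
        proof (cases "ssum P f \<le> ssum Q f")
          case True
          have "\<forall>x\<in>P. g f x = 0" unfolding g_def using gg_kill[OF fin f True _ vP] by blast
          then have "spt (g f) \<inter> P = {}" unfolding spt_def by blast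
          then have "spt (g f) \<subseteq> Y" using sub sZ vA cover unfolding P_def A_def by blast
          then show ?thesis by blast
        next
          case False
          then have le: "ssum Q f \<le> ssum P f" by simp
          have "\<forall>x\<in>Q. g f x = 0" unfolding gsym using gg_kill[OF fin f le _ vQ] by blast
          then have "spt (g f) \<inter> Q = {}" unfolding spt_def by blast
          then have "spt (g f) \<subseteq> X" using sub sZ vA cover unfolding Q_def A_def by blast
          then show ?thesis by blast
        qed
        then have "spt (g f) \<in> K" using sptL VR_restrict unfolding K_def L_def by blast
        then have "g f \<in> realization K" using gL unfolding realization_def spt_def by blast
        then show "g f \<in> closed_simplex (insert v \<sigma>) \<and> g f \<in> realization K" using gc by blast
      qed
      then show ?thesis using t tL cont by auto
    qed
  qed
  have "weak_homotopy_equivalence (realization_top K) (realization_top L) id"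
    by (rule weq_abstract[OF K L KL gK tau])
  then show ?thesis unfolding K_def L_def .
qed

end
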